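(* Let $0<R_{\min}<R_{\max}$, $0<\varepsilon<1$, fix a center $c$, and define $r_i=R_{\min}(1+\frac{e\varepsilon}{4})^i$ for $i=0,1,\dots,s$, where $s$ is the least integer with $r_s\ge R_{\max}$. Then $s\le\lceil\frac{8}{e\varepsilon}\log\frac{R_{\max}}{R_{\min}}\rceil$, and for every $r\in[R_{\min},R_{\max}]$ there is an index $i$ with $|\Phi(K_{c,r_i})-\Phi(K_{c,r})|\le\varepsilon$; in particular $s=O(\frac1\varepsilon\log\frac{R_{\max}}{R_{\min}})$ bandwidths suffice.
   Context: $B\subset\mathbb{R}^d$ finite nonempty, $m:B\to\{0,1\}$, $M=\{x\in B:m(x)=1\}$. $K_{c,r}(x)=\exp(-\|x-c\|^2/r^2)$. For $p,q\in[0,1]$ and $K:B\to[0,1]$: $g(x)=pK(x)+q(1-K(x))$, $\ell(p,q,K)=\frac{1}{|B|}\big(\sum_{x\in M}\log g(x)+\sum_{x\in B\setminus M}\log(1-g(x))\big)$, $\ell_0(q)=\frac1{|B|}(|M|\log q+|B\setminus M|\log(1-q))$, $\Phi(K)=\max_{p,q\in[0,1]}\ell(p,q,K)-\max_q\ell_0(q)$. Standing assumption: for each bandwidth the maximizer $(p^*,q^* )$ is interior to $(0,1)^2$ with finite value. *)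

theory Defs
  imports "HOL-Analysis.Analysis"
begin

definition gauss_kernel :: "'a::euclidean_space \<Rightarrow> real \<Rightarrow> 'a \<Rightarrow> real" where
  "gauss_kernel c r x = exp (- ((norm (x - c)) ^ 2) / (r ^ 2))"

definition marked :: "'a set \<Rightarrow> ('a \<Rightarrow> nat) \<Rightarrow> 'a set" where
  "marked B m = {x \<in> B. m x = 1}"

definition gmix :: "real \<Rightarrow> real \<Rightarrow> ('a \<Rightarrow> real) \<Rightarrow> 'a \<Rightarrow> real" where
  "gmix p q K x = p * K x + q * (1 - K x)"

definition loglik :: "'a set \<Rightarrow> ('a \<Rightarrow> nat) \<Rightarrow> real \<Rightarrow> real \<Rightarrow> ('a \<Rightarrow> real) \<Rightarrow> real" where
  "loglik B m p q K =
     (1 / real (card B)) *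
     ((\<Sum>x\<in>marked B m. ln (gmix p q K x)) + (\<Sum>x\<in>B - marked B m. ln (1 - gmix p q K x)))"

definition loglik0 :: "'a set \<Rightarrow> ('a \<Rightarrow> nat) \<Rightarrow> real \<Rightarrow> real" where
  "loglik0 B m q =
     (1 / real (card B)) *
     (real (card (marked B m)) * ln q + real (card (B - marked B m)) * ln (1 - q))"

text \<open>The maxima over the closed squares are taken as suprema over the open squares
  (Isabelle's ln 0 = 0 would otherwise distort boundary values; mathematically,
  with log 0 = -infinity, the sup over the open square equals the max over the closed one).\<close>
definition Phi :: "'a set \<Rightarrow> ('a \<Rightarrow> nat) \<Rightarrow> ('a \<Rightarrow> real) \<Rightarrow> real" where
  "Phi B m K =
     (SUP pq \<in> {0<..<1::real} \<times> {0<..<1::real}. loglik B m (fst pq) (snd pq) K)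
     - (SUP q \<in> {0<..<1::real}. loglik0 B m q)"

end

theory Submission
  imports Defs
begin


definition kd :: "'a::euclidean_space \<Rightarrow> real \<Rightarrow> 'a \<Rightarrow> real" where
  "kd c r x = gauss_kernel c r x * (2 * (norm (x - c))^2 / r^3)"

lemma gk_deriv:
  assumes "r > 0"
  shows "((\<lambda>r. gauss_kernel c r x) has_real_derivative kd c r x) (at r)"
  unfolding gauss_kernel_def kd_def
  using assms
  by (auto intro!: derivative_eq_intros simp: field_simps power2_eq_square power3_eq_cube)

lemma gk_pos: "0 < gauss_kernel c r x"
  by (simp add: gauss_kernel_def)

lemma gk_le1: "gauss_kernel c r x \<le> 1"
  unfolding gauss_kernel_def by (simp add: divide_nonneg_nonneg)

lemma gmix_bounds:
  fixes p q K :: real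
  assumes "0 < p" "p < 1" "0 < q" "q < 1" "0 \<le> K" "K \<le> 1"
  shows "0 < p * K + q * (1 - K)" "p * K + q * (1 - K) < 1"
proof -
  have "p * K + q * (1 - K) \<ge> min p q * K + min p q * (1 - K)"
    using assms by (intro add_mono mult_right_mono) auto
  moreover have "min p q * K + min p q * (1 - K) = min p q" by (simp add: algebra_simps)
  ultimately show "0 < p * K + q * (1 - K)" using assms by linarith
  have "p * K + q * (1 - K) \<le> max p q * K + max p q * (1 - K)"
    using assms by (intro add_mono mult_right_mono) auto
  moreover have "max p q * K + max p q * (1 - K) = max p q" by (simp add: algebra_simps)
  ultimately show "p * K + q * (1 - K) < 1" using assms by linarith
qed


lemma gmix_gk_bounds:
  assumes "0 < p" "p < 1" "0 < q" "q < 1"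
  shows "0 < gmix p q (gauss_kernel c r) x" "gmix p q (gauss_kernel c r) x < 1"
  unfolding gmix_def using gmix_bounds[OF assms, of "gauss_kernel c r x"] gk_pos[of c r x] gk_le1[of c r x]
  by auto

lemma loglik_deriv_r:
  assumes "0 < p" "p < 1" "0 < q" "q < 1" "r > 0"
  shows "((\<lambda>r. loglik B m p q (gauss_kernel c r)) has_real_derivative
   (1 / real (card B)) * ((\<Sum>x\<in>marked B m. (p - q) * kd c r x / gmix p q (gauss_kernel c r) x)
     + (\<Sum>x\<in>B - marked B m. - ((p - q) * kd c r x) / (1 - gmix p q (gauss_kernel c r) x)))) (at r)"
proof -
  have d1: "((\<lambda>r. gmix p q (gauss_kernel c r) x) has_real_derivative (p - q) * kd c r x) (at r)" for x
    unfolding gmix_def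
    by (auto intro!: derivative_eq_intros gk_deriv[OF assms(5)] simp: algebra_simps)
  have d2: "((\<lambda>r. ln (gmix p q (gauss_kernel c r) x)) has_real_derivative
        (p - q) * kd c r x / gmix p q (gauss_kernel c r) x) (at r)" for x
    using DERIV_chain2[OF DERIV_ln_divide[OF gmix_gk_bounds(1)[OF assms(1-4), of c r x]] d1[of x]]
    by simp
  have d3: "((\<lambda>r. ln (1 - gmix p q (gauss_kernel c r) x)) has_real_derivative
        - ((p - q) * kd c r x) / (1 - gmix p q (gauss_kernel c r) x)) (at r)" for x
  proof -
    have e1: "((\<lambda>r. 1 - gmix p q (gauss_kernel c r) x) has_real_derivative - ((p - q) * kd c r x)) (at r)"
      using d1[of x] by (auto intro!: derivative_eq_intros)
    have e2: "0 < 1 - gmix p q (gauss_kernel c r) x"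
      using gmix_gk_bounds(2)[OF assms(1-4), of c r x] by simp
    show ?thesis
      using DERIV_chain2[OF DERIV_ln_divide[OF e2] e1] by simp
  qed
  show ?thesis
    unfolding loglik_def
    by (intro DERIV_cmult DERIV_add DERIV_sum d2 d3)
qed


lemma uexp_le: "0 \<le> (u::real) \<Longrightarrow> u * exp (- u) \<le> 1 - exp (- u)"
proof -
  assume "0 \<le> u"
  have "1 + u \<le> exp u" by (rule exp_ge_add_one_self)
  hence "(1 + u) * exp (- u) \<le> exp u * exp (- u)" by (intro mult_right_mono) auto
  also have "exp u * exp (- u) = 1" by (simp add: exp_minus)
  finally show ?thesis by (simp add: algebra_simps)
qed

lemma mono_frac:
  fixes \<alpha> \<beta> K1 K2 :: real
  assumes "\<alpha> > 0" "\<beta> \<ge> 0" "0 \<le> K1" "K1 \<le> K2"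
  shows "K1 / (\<alpha> + \<beta> * K1) \<le> K2 / (\<alpha> + \<beta> * K2)"
proof -
  have p1: "\<alpha> + \<beta> * K1 > 0" "\<alpha> + \<beta> * K2 > 0" using assms
    by (auto intro!: add_pos_nonneg mult_nonneg_nonneg)
  have "K1 * (\<alpha> + \<beta> * K2) \<le> K2 * (\<alpha> + \<beta> * K1)"
    using assms by (simp add: algebra_simps mult_left_mono)
  thus ?thesis using p1 by (simp add: divide_simps)
qed

lemma term_boundA:
  fixes \<alpha> \<beta> D r :: real
  assumes "0 \<le> \<beta>" "\<beta> \<le> \<alpha>" "r > 0" "D \<ge> 0" "\<alpha> - \<beta> * exp (- D / r^2) > 0"
  shows "\<beta> * (exp (- D / r^2) * (2 * D / r^3)) / (\<alpha> - \<beta> * exp (- D / r^2)) \<le> 2 / r"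
proof -
  define u where "u = D / r^2"
  define K where "K = exp (- D / r^2)"
  have K: "K = exp (- u)" unfolding K_def u_def by simp
  have u0: "u \<ge> 0" unfolding u_def using assms by simp
  have K1: "K \<le> 1" using u0 K by simp
  have "\<beta> * (K * u) \<le> \<beta> * (1 - K)" using uexp_le[OF u0] K assms
    by (intro mult_left_mono) (auto simp: mult.commute)
  also have "\<dots> \<le> \<alpha> - \<beta> * K" using assms K1 by (simp add: algebra_simps)
  finally have *: "\<beta> * (K * u) \<le> \<alpha> - \<beta> * K" .
  have "\<beta> * (K * (2 * D / r^3)) = (2 / r) * (\<beta> * (K * u))"
    unfolding u_def using assms by (simp add: field_simps power3_eq_cube power2_eq_square)
  also have "\<dots> \<le> (2 / r) * (\<alpha> - \<beta> * K)" using * assms by (intro mult_left_mono) auto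
  finally have fin: "\<beta> * (K * (2 * D / r^3)) \<le> (2 / r) * (\<alpha> - \<beta> * K)" .
  have dpos: "\<alpha> - \<beta> * K > 0" using assms K_def by simp
  have "\<beta> * (K * (2 * D / r^3)) / (\<alpha> - \<beta> * K) \<le> 2 / r"
    using fin by (simp only: pos_divide_le_eq[OF dpos])
  thus ?thesis unfolding K_def .
qed

lemma term_boundB:
  fixes \<alpha> \<beta> D r s :: real
  assumes "\<alpha> > 0" "\<beta> \<ge> 0" "0 < r" "r \<le> s" "D \<ge> 0"
  shows "\<beta> * (exp (- D / r^2) * (2 * D / r^3)) / (\<alpha> + \<beta> * exp (- D / r^2))
     \<le> 2 * s^2 / r^3 * (\<beta> * (1 - exp (- D / s^2)) / (\<alpha> + \<beta> * exp (- D / s^2)))"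
proof -
  define u where "u = D / s^2"
  define Kr where "Kr = exp (- D / r^2)"
  define Ks where "Ks = exp (- D / s^2)"
  have s0: "s > 0" using assms by simp
  hence "s \<noteq> 0" by simp
  have u0: "u \<ge> 0" unfolding u_def using assms by simp
  have "D / s^2 \<le> D / r^2" using assms by (intro divide_left_mono) (auto intro!: power_mono)
  hence KK: "Kr \<le> Ks" unfolding Kr_def Ks_def by simp
  have Kr0: "0 \<le> Kr" unfolding Kr_def by simp
  have dpos: "\<alpha> + \<beta> * Ks > 0" using assms unfolding Ks_def by (intro add_pos_nonneg) auto
  have dpos2: "\<alpha> + \<beta> * Kr > 0" using assms Kr0 by (intro add_pos_nonneg) auto
  have eq: "\<beta> * (Kr * (2 * D / r^3)) / (\<alpha> + \<beta> * Kr) = 2 * s^2 / r^3 * (\<beta> * u * (Kr / (\<alpha> + \<beta> * Kr)))"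
  proof -
    define E where "E = \<alpha> + \<beta> * Kr"
    have E0: "E \<noteq> 0" using dpos2 E_def by simp
    have us: "D = s^2 * u" unfolding u_def using \<open>s \<noteq> 0\<close> by simp
    have "\<beta> * (Kr * (2 * D / r^3)) / E = 2 * s^2 / r^3 * (\<beta> * u * (Kr / E))"
      unfolding us using E0 assms by (simp add: field_simps)
    thus ?thesis unfolding E_def .
  qed
  have "Kr / (\<alpha> + \<beta> * Kr) \<le> Ks / (\<alpha> + \<beta> * Ks)" by (rule mono_frac) (use assms KK Kr0 in auto)
  hence "\<beta> * u * (Kr / (\<alpha> + \<beta> * Kr)) \<le> \<beta> * u * (Ks / (\<alpha> + \<beta> * Ks))"
    using assms u0 by (intro mult_left_mono) auto
  also have "\<dots> = \<beta> * (u * Ks) / (\<alpha> + \<beta> * Ks)" by simp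
  also have "\<dots> \<le> \<beta> * (1 - Ks) / (\<alpha> + \<beta> * Ks)"
    using uexp_le[OF u0] assms dpos unfolding Ks_def u_def
    by (intro divide_right_mono mult_left_mono) (auto simp: mult.commute)
  finally have "\<beta> * u * (Kr / (\<alpha> + \<beta> * Kr)) \<le> \<beta> * (1 - Ks) / (\<alpha> + \<beta> * Ks)" .
  hence "2 * s^2 / r^3 * (\<beta> * u * (Kr / (\<alpha> + \<beta> * Kr))) \<le> 2 * s^2 / r^3 * (\<beta> * (1 - Ks) / (\<alpha> + \<beta> * Ks))"
    using assms by (intro mult_left_mono) auto
  hence "\<beta> * (Kr * (2 * D / r^3)) / (\<alpha> + \<beta> * Kr) \<le> 2 * s^2 / r^3 * (\<beta> * (1 - Ks) / (\<alpha> + \<beta> * Ks))"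
    by (subst eq)
  thus ?thesis unfolding Kr_def Ks_def .
qed


lemma kd_eq: "kd c r x = exp (- ((norm (x - c))^2) / r^2) * (2 * (norm (x - c))^2 / r^3)"
  unfolding kd_def gauss_kernel_def ..

lemma gmix_eq1: "gmix p q K x = q - (q - p) * K x"
  unfolding gmix_def by (simp add: algebra_simps)
lemma gmix_eq2: "1 - gmix p q K x = (1 - q) - (p - q) * K x"
  unfolding gmix_def by (simp add: algebra_simps)
lemma gmix_eq3: "gmix p q K x = q + (p - q) * K x"
  unfolding gmix_def by (simp add: algebra_simps)
lemma gmix_eq4: "1 - gmix p q K x = (1 - q) + (q - p) * K x"
  unfolding gmix_def by (simp add: algebra_simps)

lemma kd_nonneg: "r > 0 \<Longrightarrow> 0 \<le> kd c r x"
  unfolding kd_def gauss_kernel_def by simp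

lemma pointA_marked:
  assumes "0 < p" "p < 1" "0 < q" "q < 1" "r > 0"
  shows "(p - q) * kd c r x / gmix p q (gauss_kernel c r) x \<ge> - 2 / r"
proof (cases "p \<ge> q")
  case True
  have "0 \<le> (p - q) * kd c r x / gmix p q (gauss_kernel c r) x"
    using kd_nonneg[OF assms(5), of c x] gmix_gk_bounds[OF assms(1-4), of c r x] True by simp
  moreover have "- 2 / r \<le> 0" using assms by simp
  ultimately show ?thesis by linarith
next
  case False
  have g: "gmix p q (gauss_kernel c r) x = q - (q - p) * exp (- ((norm (x - c))^2) / r^2)"
    unfolding gmix_eq1 gauss_kernel_def ..
  have "(q - p) * (exp (- ((norm (x - c))^2) / r^2) * (2 * (norm (x - c))^2 / r^3)) /
        (q - (q - p) * exp (- ((norm (x - c))^2) / r^2)) \<le> 2 / r"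
    using gmix_gk_bounds(1)[OF assms(1-4), of c r x] False assms unfolding g
    by (intro term_boundA) auto
  hence "(q - p) * kd c r x / gmix p q (gauss_kernel c r) x \<le> 2 / r"
    unfolding g kd_eq by simp
  moreover have "(p - q) * kd c r x / gmix p q (gauss_kernel c r) x = - ((q - p) * kd c r x / gmix p q (gauss_kernel c r) x)"
    by (simp add: algebra_simps minus_divide_left)
  ultimately show ?thesis by simp
qed

lemma pointA_unmarked:
  assumes "0 < p" "p < 1" "0 < q" "q < 1" "r > 0"
  shows "- ((p - q) * kd c r x) / (1 - gmix p q (gauss_kernel c r) x) \<ge> - 2 / r"
proof (cases "p \<le> q")
  case True
  have "0 \<le> (q - p) * kd c r x / (1 - gmix p q (gauss_kernel c r) x)"
    using kd_nonneg[OF assms(5), of c x] gmix_gk_bounds[OF assms(1-4), of c r x] True by simp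
  moreover have neq: "- ((p - q) * kd c r x) = (q - p) * kd c r x" by (simp add: algebra_simps)
  moreover have "- 2 / r \<le> 0" using assms by simp
  ultimately show ?thesis by (simp only: neq)
next
  case False
  have g: "1 - gmix p q (gauss_kernel c r) x = (1 - q) - (p - q) * exp (- ((norm (x - c))^2) / r^2)"
    unfolding gmix_eq2 gauss_kernel_def ..
  have "(p - q) * (exp (- ((norm (x - c))^2) / r^2) * (2 * (norm (x - c))^2 / r^3)) /
        ((1 - q) - (p - q) * exp (- ((norm (x - c))^2) / r^2)) \<le> 2 / r"
    using gmix_gk_bounds(2)[OF assms(1-4), of c r x] False assms g
    by (intro term_boundA) auto
  hence "(p - q) * kd c r x / (1 - gmix p q (gauss_kernel c r) x) \<le> 2 / r"
    unfolding g kd_eq by simp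
  moreover have "- ((p - q) * kd c r x) / (1 - gmix p q (gauss_kernel c r) x) = - ((p - q) * kd c r x / (1 - gmix p q (gauss_kernel c r) x))"
    by (rule minus_divide_left[symmetric])
  moreover have "- 2 / r = - (2 / r)" by simp
  ultimately show ?thesis by linarith
qed


lemma avg_ge: "(n::real) > 0 \<Longrightarrow> S \<ge> n * c \<Longrightarrow> (1 / n) * S \<ge> c"
  by (simp add: field_simps)

lemma avg_le: "(n::real) > 0 \<Longrightarrow> S \<le> n * c \<Longrightarrow> (1 / n) * S \<le> c"
  by (simp add: field_simps)

lemma card_split:
  assumes "finite B"
  shows "real (card (marked B m)) + real (card (B - marked B m)) = real (card B)"
proof -
  have sub: "marked B m \<subseteq> B" unfolding marked_def by auto
  have fin: "finite (marked B m)" by (rule finite_subset[OF sub assms])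
  have c1: "card (B - marked B m) = card B - card (marked B m)" by (rule card_Diff_subset[OF fin sub])
  have c2: "card (marked B m) \<le> card B" by (rule card_mono[OF assms sub])
  have "card (marked B m) + card (B - marked B m) = card B" using c1 c2 by simp
  thus ?thesis by (metis of_nat_add)
qed

lemma derivA_bound:
  assumes "finite B" "B \<noteq> {}" "0 < p" "p < 1" "0 < q" "q < 1" "r > 0"
  shows "(1 / real (card B)) * ((\<Sum>x\<in>marked B m. (p - q) * kd c r x / gmix p q (gauss_kernel c r) x)
     + (\<Sum>x\<in>B - marked B m. - ((p - q) * kd c r x) / (1 - gmix p q (gauss_kernel c r) x))) \<ge> - 2 / r"
proof -
  have n0: "real (card B) > 0" using assms(1,2) by (simp add: card_gt_0_iff)
  have s1: "(\<Sum>x\<in>marked B m. (p - q) * kd c r x / gmix p q (gauss_kernel c r) x) \<ge> (\<Sum>x\<in>marked B m. - 2 / r)"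
    by (rule sum_mono, rule pointA_marked[OF assms(3-7)])
  have s2: "(\<Sum>x\<in>B - marked B m. - ((p - q) * kd c r x) / (1 - gmix p q (gauss_kernel c r) x)) \<ge> (\<Sum>x\<in>B - marked B m. - 2 / r)"
    by (rule sum_mono, rule pointA_unmarked[OF assms(3-7)])
  have "(\<Sum>x\<in>marked B m. - 2 / r) + (\<Sum>x\<in>B - marked B m. - 2 / r)
      = (real (card (marked B m)) + real (card (B - marked B m))) * (- 2 / r)"
    by (simp only: sum_constant distrib_right)
  also have "\<dots> = real (card B) * (- 2 / r)" by (simp only: card_split[OF assms(1)])
  finally have "(\<Sum>x\<in>marked B m. (p - q) * kd c r x / gmix p q (gauss_kernel c r) x)
     + (\<Sum>x\<in>B - marked B m. - ((p - q) * kd c r x) / (1 - gmix p q (gauss_kernel c r) x)) \<ge> real (card B) * (- 2 / r)"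
    using s1 s2 by linarith
  from avg_ge[OF n0 this] show ?thesis .
qed

lemma compA:
  assumes "finite B" "B \<noteq> {}" "0 < p" "p < 1" "0 < q" "q < 1" "0 < t" "t \<le> s"
  shows "loglik B m p q (gauss_kernel c t) \<le> loglik B m p q (gauss_kernel c s) + 2 * ln (s / t)"
proof -
  have "loglik B m p q (gauss_kernel c t) + 2 * ln t \<le> loglik B m p q (gauss_kernel c s) + 2 * ln s"
  proof (rule DERIV_nonneg_imp_nondecreasing[OF assms(8)])
    fix x assume x: "t \<le> x" "x \<le> s"
    hence x0: "x > 0" using assms by simp
    show "\<exists>y. ((\<lambda>r. loglik B m p q (gauss_kernel c r) + 2 * ln r) has_real_derivative y) (at x) \<and> 0 \<le> y"
      apply (rule exI, rule conjI)
       apply (rule DERIV_add[OF loglik_deriv_r[OF assms(3-6) x0] DERIV_cmult[OF DERIV_ln_divide[OF x0]]])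
      using derivA_bound[OF assms(1-6) x0, where m=m and c=c] by simp
  qed
  thus ?thesis using assms by (simp add: ln_div)
qed


lemma loglik_deriv_q:
  assumes "0 < p" "p < 1" "0 < q" "q < 1"
  shows "((\<lambda>q. loglik B m p q (gauss_kernel c s)) has_real_derivative
   (1 / real (card B)) * ((\<Sum>x\<in>marked B m. (1 - gauss_kernel c s x) / gmix p q (gauss_kernel c s) x)
     + (\<Sum>x\<in>B - marked B m. - (1 - gauss_kernel c s x) / (1 - gmix p q (gauss_kernel c s) x)))) (at q)"
proof -
  have d1: "((\<lambda>q. gmix p q (gauss_kernel c s) x) has_real_derivative (1 - gauss_kernel c s x)) (at q)" for x
    unfolding gmix_def by (auto intro!: derivative_eq_intros)
  have d2: "((\<lambda>q. ln (gmix p q (gauss_kernel c s) x)) has_real_derivative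
        (1 - gauss_kernel c s x) / gmix p q (gauss_kernel c s) x) (at q)" for x
    using DERIV_chain2[OF DERIV_ln_divide[OF gmix_gk_bounds(1)[OF assms(1-4), of c s x]] d1[of x]]
    by simp
  have d3: "((\<lambda>q. ln (1 - gmix p q (gauss_kernel c s) x)) has_real_derivative
        - (1 - gauss_kernel c s x) / (1 - gmix p q (gauss_kernel c s) x)) (at q)" for x
  proof -
    have e1: "((\<lambda>q. 1 - gmix p q (gauss_kernel c s) x) has_real_derivative - (1 - gauss_kernel c s x)) (at q)"
      using d1[of x] by (auto intro!: derivative_eq_intros)
    have e2: "0 < 1 - gmix p q (gauss_kernel c s) x"
      using gmix_gk_bounds(2)[OF assms(1-4), of c s x] by simp
    show ?thesis
      using DERIV_chain2[OF DERIV_ln_divide[OF e2] e1] by simp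
  qed
  show ?thesis
    unfolding loglik_def
    by (intro DERIV_cmult DERIV_add DERIV_sum d2 d3)
qed

lemma FOC:
  assumes "finite B" "B \<noteq> {}" "0 < p" "p < 1" "0 < q" "q < 1"
    and mx: "\<forall>q'\<in>{0<..<1}. loglik B m p q' (gauss_kernel c s) \<le> loglik B m p q (gauss_kernel c s)"
  shows "(\<Sum>x\<in>marked B m. (1 - gauss_kernel c s x) / gmix p q (gauss_kernel c s) x)
     = (\<Sum>x\<in>B - marked B m. (1 - gauss_kernel c s x) / (1 - gmix p q (gauss_kernel c s) x))"
proof -
  have n0: "real (card B) > 0" using assms(1,2) by (simp add: card_gt_0_iff)
  have "(1 / real (card B)) * ((\<Sum>x\<in>marked B m. (1 - gauss_kernel c s x) / gmix p q (gauss_kernel c s) x)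
     + (\<Sum>x\<in>B - marked B m. - (1 - gauss_kernel c s x) / (1 - gmix p q (gauss_kernel c s) x))) = 0"
  proof (rule DERIV_local_max[OF loglik_deriv_q[OF assms(3-6)]])
    show "0 < min q (1 - q)" using assms by simp
    show "\<forall>y. \<bar>q - y\<bar> < min q (1 - q) \<longrightarrow> loglik B m p y (gauss_kernel c s) \<le> loglik B m p q (gauss_kernel c s)"
      using mx by (auto simp: abs_if split: if_splits)
  qed
  moreover have "(\<Sum>x\<in>B - marked B m. - (1 - gauss_kernel c s x) / (1 - gmix p q (gauss_kernel c s) x))
     = - (\<Sum>x\<in>B - marked B m. (1 - gauss_kernel c s x) / (1 - gmix p q (gauss_kernel c s) x))"
    unfolding minus_divide_left[symmetric] sum_negf ..
  ultimately have "(\<Sum>x\<in>marked B m. (1 - gauss_kernel c s x) / gmix p q (gauss_kernel c s) x)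
     - (\<Sum>x\<in>B - marked B m. (1 - gauss_kernel c s x) / (1 - gmix p q (gauss_kernel c s) x)) = 0"
    using n0 by simp
  thus ?thesis by simp
qed


lemma pointB:
  assumes "0 < p" "p < 1" "0 < q" "q < 1" "0 < r" "r \<le> s" "q \<le> p"
  shows "(p - q) * kd c r x / gmix p q (gauss_kernel c r) x
     \<le> 2 * s^2 / r^3 * ((p - q) * (1 - gauss_kernel c s x) / gmix p q (gauss_kernel c s) x)"
proof -
  have "(p - q) * (exp (- ((norm (x - c))^2) / r^2) * (2 * (norm (x - c))^2 / r^3)) /
        (q + (p - q) * exp (- ((norm (x - c))^2) / r^2))
     \<le> 2 * s^2 / r^3 * ((p - q) * (1 - exp (- ((norm (x - c))^2) / s^2)) / (q + (p - q) * exp (- ((norm (x - c))^2) / s^2)))"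
    using assms by (intro term_boundB) auto
  thus ?thesis unfolding kd_eq gmix_eq3 gauss_kernel_def .
qed

lemma pointB':
  assumes "0 < p" "p < 1" "0 < q" "q < 1" "0 < r" "r \<le> s" "p \<le> q"
  shows "- ((p - q) * kd c r x) / (1 - gmix p q (gauss_kernel c r) x)
     \<le> 2 * s^2 / r^3 * ((q - p) * (1 - gauss_kernel c s x) / (1 - gmix p q (gauss_kernel c s) x))"
proof -
  have "(q - p) * (exp (- ((norm (x - c))^2) / r^2) * (2 * (norm (x - c))^2 / r^3)) /
        ((1 - q) + (q - p) * exp (- ((norm (x - c))^2) / r^2))
     \<le> 2 * s^2 / r^3 * ((q - p) * (1 - exp (- ((norm (x - c))^2) / s^2)) / ((1 - q) + (q - p) * exp (- ((norm (x - c))^2) / s^2)))"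
    using assms by (intro term_boundB) auto
  moreover have "- ((p - q) * kd c r x) = (q - p) * kd c r x" by (simp add: algebra_simps)
  ultimately show ?thesis unfolding kd_eq gmix_eq4 gauss_kernel_def by simp
qed

lemma derivB_bound:
  assumes "finite B" "B \<noteq> {}" "0 < p" "p < 1" "0 < q" "q < 1" "0 < r" "r \<le> s"
    and foc: "(\<Sum>x\<in>marked B m. (1 - gauss_kernel c s x) / gmix p q (gauss_kernel c s) x)
     = (\<Sum>x\<in>B - marked B m. (1 - gauss_kernel c s x) / (1 - gmix p q (gauss_kernel c s) x))"
  shows "(1 / real (card B)) * ((\<Sum>x\<in>marked B m. (p - q) * kd c r x / gmix p q (gauss_kernel c r) x)
     + (\<Sum>x\<in>B - marked B m. - ((p - q) * kd c r x) / (1 - gmix p q (gauss_kernel c r) x))) \<le> 2 * s^2 / r^3"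
proof -
  define C where "C = 2 * s^2 / r^3"
  have C0: "C \<ge> 0" unfolding C_def using assms(7) by (intro divide_nonneg_pos) auto
  have n0: "real (card B) > 0" using assms(1,2) by (simp add: card_gt_0_iff)
  have sub: "marked B m \<subseteq> B" unfolding marked_def by auto
  have cM: "real (card (marked B m)) \<le> real (card B)" "real (card (B - marked B m)) \<le> real (card B)"
    using card_split[OF assms(1), of m] by linarith+
  have gsb: "0 < gmix p q (gauss_kernel c s) x" "gmix p q (gauss_kernel c s) x < 1" for x
    using gmix_gk_bounds[OF assms(3-6)] by auto
  have grb: "0 < gmix p q (gauss_kernel c r) x" "gmix p q (gauss_kernel c r) x < 1" for x
    using gmix_gk_bounds[OF assms(3-6)] by auto
  have kdn: "0 \<le> kd c r x" for x using kd_nonneg[OF assms(7)] by auto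
  have Ks: "0 < gauss_kernel c s x" "gauss_kernel c s x \<le> 1" for x using gk_pos gk_le1 by auto
  have total: "(\<Sum>x\<in>marked B m. (p - q) * kd c r x / gmix p q (gauss_kernel c r) x)
     + (\<Sum>x\<in>B - marked B m. - ((p - q) * kd c r x) / (1 - gmix p q (gauss_kernel c r) x)) \<le> C * real (card B)"
  proof (cases "q \<le> p")
    case True
    have s1: "(\<Sum>x\<in>marked B m. (p - q) * kd c r x / gmix p q (gauss_kernel c r) x)
        \<le> (\<Sum>x\<in>marked B m. C * ((p - q) * (1 - gauss_kernel c s x) / gmix p q (gauss_kernel c s) x))"
      unfolding C_def by (rule sum_mono, rule pointB[OF assms(3-8) True])
    also have "\<dots> = C * ((p - q) * (\<Sum>x\<in>marked B m. (1 - gauss_kernel c s x) / gmix p q (gauss_kernel c s) x))"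
      by (simp add: sum_distrib_left)
    also have "\<dots> = C * (\<Sum>x\<in>B - marked B m. (p - q) * (1 - gauss_kernel c s x) / (1 - gmix p q (gauss_kernel c s) x))"
      unfolding foc by (simp add: sum_distrib_left)
    also have "\<dots> \<le> C * (\<Sum>x\<in>B - marked B m. 1)"
    proof (intro mult_left_mono[OF _ C0] sum_mono)
      fix x
      have "(p - q) * (1 - gauss_kernel c s x) \<le> 1 - gmix p q (gauss_kernel c s) x"
        unfolding gmix_eq2 using assms(1-8) Ks[of x] by (simp add: algebra_simps)
      thus "(p - q) * (1 - gauss_kernel c s x) / (1 - gmix p q (gauss_kernel c s) x) \<le> 1"
        using gsb[of x] by simp
    qed
    also have "\<dots> \<le> C * real (card B)" using cM C0 by (simp add: mult_left_mono)
    finally have A1: "(\<Sum>x\<in>marked B m. (p - q) * kd c r x / gmix p q (gauss_kernel c r) x) \<le> C * real (card B)" .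
    have A2: "(\<Sum>x\<in>B - marked B m. - ((p - q) * kd c r x) / (1 - gmix p q (gauss_kernel c r) x)) \<le> 0"
    proof (intro sum_nonpos)
      fix x
      have "0 \<le> (p - q) * kd c r x / (1 - gmix p q (gauss_kernel c r) x)"
        using True kdn[of x] grb[of x] by simp
      moreover have "- ((p - q) * kd c r x) / (1 - gmix p q (gauss_kernel c r) x) = - ((p - q) * kd c r x / (1 - gmix p q (gauss_kernel c r) x))"
        by (rule minus_divide_left[symmetric])
      ultimately show "- ((p - q) * kd c r x) / (1 - gmix p q (gauss_kernel c r) x) \<le> 0"
        by (metis neg_le_0_iff_le)
    qed
    show ?thesis using A1 A2 by linarith
  next
    case False
    have s1: "(\<Sum>x\<in>B - marked B m. - ((p - q) * kd c r x) / (1 - gmix p q (gauss_kernel c r) x))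
        \<le> (\<Sum>x\<in>B - marked B m. C * ((q - p) * (1 - gauss_kernel c s x) / (1 - gmix p q (gauss_kernel c s) x)))"
      unfolding C_def using False by (intro sum_mono pointB'[OF assms(3-8)]) auto
    also have "\<dots> = C * ((q - p) * (\<Sum>x\<in>B - marked B m. (1 - gauss_kernel c s x) / (1 - gmix p q (gauss_kernel c s) x)))"
      by (simp add: sum_distrib_left)
    also have "\<dots> = C * (\<Sum>x\<in>marked B m. (q - p) * (1 - gauss_kernel c s x) / gmix p q (gauss_kernel c s) x)"
      unfolding foc[symmetric] by (simp add: sum_distrib_left)
    also have "\<dots> \<le> C * (\<Sum>x\<in>marked B m. 1)"
    proof (intro mult_left_mono[OF _ C0] sum_mono)
      fix x
      have "(q - p) * (1 - gauss_kernel c s x) \<le> gmix p q (gauss_kernel c s) x"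
        unfolding gmix_eq1 using assms(1-8) Ks[of x] by (simp add: algebra_simps)
      thus "(q - p) * (1 - gauss_kernel c s x) / gmix p q (gauss_kernel c s) x \<le> 1"
        using gsb[of x] by simp
    qed
    also have "\<dots> \<le> C * real (card B)" using cM C0 by (simp add: mult_left_mono)
    finally have A1: "(\<Sum>x\<in>B - marked B m. - ((p - q) * kd c r x) / (1 - gmix p q (gauss_kernel c r) x)) \<le> C * real (card B)" .
    have A2: "(\<Sum>x\<in>marked B m. (p - q) * kd c r x / gmix p q (gauss_kernel c r) x) \<le> 0"
    proof (intro sum_nonpos)
      fix x
      have "0 \<le> (q - p) * kd c r x / gmix p q (gauss_kernel c r) x"
        using False kdn[of x] grb[of x] by simp
      moreover have "(p - q) * kd c r x / gmix p q (gauss_kernel c r) x = - ((q - p) * kd c r x / gmix p q (gauss_kernel c r) x)"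
    by (simp add: algebra_simps minus_divide_left)
      ultimately show "(p - q) * kd c r x / gmix p q (gauss_kernel c r) x \<le> 0"
        by (metis neg_le_0_iff_le)
    qed
    show ?thesis using A1 A2 by linarith
  qed
  have "(1 / real (card B)) * ((\<Sum>x\<in>marked B m. (p - q) * kd c r x / gmix p q (gauss_kernel c r) x)
     + (\<Sum>x\<in>B - marked B m. - ((p - q) * kd c r x) / (1 - gmix p q (gauss_kernel c r) x)))
     \<le> (1 / real (card B)) * (C * real (card B))"
    using total n0 by (intro mult_left_mono) auto
  thus ?thesis using n0 unfolding C_def by simp
qed


lemma compB:
  assumes "finite B" "B \<noteq> {}" "0 < p" "p < 1" "0 < q" "q < 1" "0 < t" "t \<le> s"
    and foc: "(\<Sum>x\<in>marked B m. (1 - gauss_kernel c s x) / gmix p q (gauss_kernel c s) x)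
     = (\<Sum>x\<in>B - marked B m. (1 - gauss_kernel c s x) / (1 - gmix p q (gauss_kernel c s) x))"
  shows "loglik B m p q (gauss_kernel c s) \<le> loglik B m p q (gauss_kernel c t) + (s^2 / t^2 - 1)"
proof -
  have "loglik B m p q (gauss_kernel c t) + s^2 / t^2 \<ge> loglik B m p q (gauss_kernel c s) + s^2 / s^2"
  proof (rule DERIV_nonpos_imp_nonincreasing[OF assms(8)])
    fix x assume x: "t \<le> x" "x \<le> s"
    hence x0: "x > 0" using assms(1-8) by simp
    have dd: "((\<lambda>r. s^2 / r^2) has_real_derivative - (2 * s^2 / x^3)) (at x)"
      using x0 by (auto intro!: derivative_eq_intros simp: field_simps power2_eq_square power3_eq_cube)
    show "\<exists>y. ((\<lambda>r. loglik B m p q (gauss_kernel c r) + s^2 / r^2) has_real_derivative y) (at x) \<and> y \<le> 0"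
      apply (rule exI, rule conjI)
       apply (rule DERIV_add[OF loglik_deriv_r[OF assms(3-6) x0] dd])
      using derivB_bound[OF assms(1-6) x0 x(2) foc] by simp
  qed
  moreover have "s^2 / s^2 = 1" using assms(7,8) by simp
  ultimately show ?thesis by simp
qed

lemma Phi_opt:
  assumes "0 < p" "p < 1" "0 < q" "q < 1"
    and mx: "\<forall>p'\<in>{0<..<1}. \<forall>q'\<in>{0<..<1}. loglik B m p' q' K \<le> loglik B m p q K"
  shows "Phi B m K = loglik B m p q K - (SUP q \<in> {0<..<1::real}. loglik0 B m q)"
proof -
  have "(SUP pq \<in> {0<..<1::real} \<times> {0<..<1::real}. loglik B m (fst pq) (snd pq) K) = loglik B m p q K"
  proof (rule cSup_eq_maximum)
    show "loglik B m p q K \<in> (\<lambda>pq. loglik B m (fst pq) (snd pq) K) ` ({0<..<1} \<times> {0<..<1})"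
      by (rule image_eqI[where x="(p, q)"]) (use assms(1-4) in simp_all)
    fix y assume "y \<in> (\<lambda>pq. loglik B m (fst pq) (snd pq) K) ` ({0<..<1::real} \<times> {0<..<1::real})"
    then obtain a b where ab: "a \<in> {0<..<1::real}" "b \<in> {0<..<1::real}" "y = loglik B m a b K" by auto
    thus "y \<le> loglik B m p q K" using mx by blast
  qed
  thus ?thesis unfolding Phi_def by simp
qed

lemma ln_sq_le: "0 < (t::real) \<Longrightarrow> t \<le> s \<Longrightarrow> 2 * ln (s / t) \<le> s^2 / t^2 - 1"
proof -
  assume a: "0 < t" "t \<le> s"
  have "2 * ln (s / t) = ln ((s / t)^2)" using a by (simp add: ln_realpow)
  also have "\<dots> \<le> (s / t)^2 - 1" using a by (intro ln_le_minus_one) simp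
  finally show ?thesis by (simp add: power_divide)
qed

lemma phi_close:
  assumes finB: "finite B" and neB: "B \<noteq> {}"
    and interior_max: "\<forall>r>0. \<exists>p\<in>{0<..<1}. \<exists>q\<in>{0<..<1}.
          \<forall>p'\<in>{0<..<1}. \<forall>q'\<in>{0<..<1}.
            loglik B m p' q' (gauss_kernel c r) \<le> loglik B m p q (gauss_kernel c r)"
    and t0: "0 < t" and ts: "t \<le> s"
  shows "\<bar>Phi B m (gauss_kernel c t) - Phi B m (gauss_kernel c s)\<bar> \<le> s^2 / t^2 - 1"
proof -
  have s0: "0 < s" using t0 ts by linarith
  obtain p1 q1 where o1: "p1 \<in> {0<..<1}" "q1 \<in> {0<..<1}"
    "\<forall>p'\<in>{0<..<1}. \<forall>q'\<in>{0<..<1}. loglik B m p' q' (gauss_kernel c t) \<le> loglik B m p1 q1 (gauss_kernel c t)"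
    using interior_max t0 by blast
  obtain p2 q2 where o2: "p2 \<in> {0<..<1}" "q2 \<in> {0<..<1}"
    "\<forall>p'\<in>{0<..<1}. \<forall>q'\<in>{0<..<1}. loglik B m p' q' (gauss_kernel c s) \<le> loglik B m p2 q2 (gauss_kernel c s)"
    using interior_max s0 by blast
  have b1: "0 < p1" "p1 < 1" "0 < q1" "q1 < 1" using o1(1,2) by auto
  have b2: "0 < p2" "p2 < 1" "0 < q2" "q2 < 1" using o2(1,2) by auto
  have P1: "Phi B m (gauss_kernel c t) = loglik B m p1 q1 (gauss_kernel c t) - (SUP q \<in> {0<..<1::real}. loglik0 B m q)"
    by (rule Phi_opt[OF b1 o1(3)])
  have P2: "Phi B m (gauss_kernel c s) = loglik B m p2 q2 (gauss_kernel c s) - (SUP q \<in> {0<..<1::real}. loglik0 B m q)"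
    by (rule Phi_opt[OF b2 o2(3)])
  have u1: "loglik B m p1 q1 (gauss_kernel c t) \<le> loglik B m p1 q1 (gauss_kernel c s) + 2 * ln (s / t)"
    by (rule compA[OF finB neB b1 t0 ts])
  have u2: "loglik B m p1 q1 (gauss_kernel c s) \<le> loglik B m p2 q2 (gauss_kernel c s)"
    using o1(1,2) o2(3) by blast
  have mx2: "\<forall>q'\<in>{0<..<1}. loglik B m p2 q' (gauss_kernel c s) \<le> loglik B m p2 q2 (gauss_kernel c s)"
    using o2(1,3) by blast
  have foc: "(\<Sum>x\<in>marked B m. (1 - gauss_kernel c s x) / gmix p2 q2 (gauss_kernel c s) x)
     = (\<Sum>x\<in>B - marked B m. (1 - gauss_kernel c s x) / (1 - gmix p2 q2 (gauss_kernel c s) x))"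
    by (rule FOC[OF finB neB b2 mx2])
  have l1: "loglik B m p2 q2 (gauss_kernel c s) \<le> loglik B m p2 q2 (gauss_kernel c t) + (s^2 / t^2 - 1)"
    by (rule compB[OF finB neB b2 t0 ts foc])
  have l2: "loglik B m p2 q2 (gauss_kernel c t) \<le> loglik B m p1 q1 (gauss_kernel c t)"
    using o2(1,2) o1(3) by blast
  have "2 * ln (s / t) \<le> s^2 / t^2 - 1" by (rule ln_sq_le[OF t0 ts])
  thus ?thesis unfolding P1 P2 using u1 u2 l1 l2 by linarith
qed

lemma ln_lower: "0 < (a::real) \<Longrightarrow> a \<le> 1 \<Longrightarrow> a / 2 \<le> ln (1 + a)"
proof -
  assume a: "0 < a" "a \<le> 1"
  have "ln (1 / (1 + a)) \<le> 1 / (1 + a) - 1" using a by (intro ln_le_minus_one) simp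
  hence "- ln (1 + a) \<le> 1 / (1 + a) - 1" using a by (simp add: ln_div)
  moreover have "1 / (1 + a) - 1 = - (a / (1 + a))" using a by (simp add: field_simps)
  moreover have "a / 2 \<le> a / (1 + a)" using a by (intro divide_left_mono) auto
  ultimately show ?thesis by linarith
qed

theorem mainTheorem8:
  fixes B :: "'a::euclidean_space set" and m :: "'a \<Rightarrow> nat" and c :: 'a
    and Rmin Rmax \<epsilon> :: real
  assumes finB: "finite B" and neB: "B \<noteq> {}"
    and m01: "\<forall>x\<in>B. m x \<in> {0, 1}"
    and interior_max: "\<forall>r>0. \<exists>p\<in>{0<..<1}. \<exists>q\<in>{0<..<1}.
          \<forall>p'\<in>{0<..<1}. \<forall>q'\<in>{0<..<1}.
            loglik B m p' q' (gauss_kernel c r) \<le> loglik B m p q (gauss_kernel c r)"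
    and R: "0 < Rmin" "Rmin < Rmax"
    and eps: "0 < \<epsilon>" "\<epsilon> < 1"
  defines "rr \<equiv> (\<lambda>i::nat. Rmin * (1 + exp 1 * \<epsilon> / 4) ^ i)"
  defines "s \<equiv> (LEAST i::nat. rr i \<ge> Rmax)"
  shows "real s \<le> real_of_int \<lceil>8 / (exp 1 * \<epsilon>) * ln (Rmax / Rmin)\<rceil>
       \<and> (\<forall>r\<in>{Rmin..Rmax}. \<exists>i\<le>s.
            \<bar>Phi B m (gauss_kernel c (rr i)) - Phi B m (gauss_kernel c r)\<bar> \<le> \<epsilon>)"
proof -
  define a where "a = exp 1 * \<epsilon> / 4"
  have e3: "exp 1 \<le> (3::real)" by (rule exp_le)
  have a0: "0 < a" unfolding a_def using eps by simp
  have "exp 1 * \<epsilon> \<le> 3 * 1" using e3 eps by (intro mult_mono) auto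
  hence a1: "a \<le> 1" unfolding a_def by simp
  have "exp 1 * \<epsilon> \<le> 4 * \<epsilon>" using e3 eps by (intro mult_right_mono) auto
  hence ae: "a \<le> \<epsilon>" unfolding a_def by simp
  have rr_def': "rr i = Rmin * (1 + a) ^ i" for i unfolding rr_def a_def ..
  have rr_pos: "rr i > 0" for i unfolding rr_def' using R a0 by simp
  define L where "L = ln (Rmax / Rmin)"
  have L0: "L > 0" unfolding L_def using R by simp
  define N where "N = nat \<lceil>8 / (exp 1 * \<epsilon>) * L\<rceil>"
  have coef: "8 / (exp 1 * \<epsilon>) = 2 / a" unfolding a_def by (simp add: field_simps)
  have "0 \<le> 8 / (exp 1 * \<epsilon>) * L" using L0 eps by simp
  hence ceil0: "0 \<le> \<lceil>8 / (exp 1 * \<epsilon>) * L\<rceil>" by simp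
  have NR: "real N = real_of_int \<lceil>8 / (exp 1 * \<epsilon>) * L\<rceil>" unfolding N_def using ceil0 by simp
  have "8 / (exp 1 * \<epsilon>) * L \<le> real_of_int \<lceil>8 / (exp 1 * \<epsilon>) * L\<rceil>" by (rule le_of_int_ceiling)
  hence NL: "real N \<ge> 2 / a * L" unfolding NR coef .
  have "L = (2 / a * L) * (a / 2)" using a0 by simp
  also have "\<dots> \<le> real N * ln (1 + a)"
    using NL ln_lower[OF a0 a1] a0 L0 by (intro mult_mono) auto
  finally have "exp L \<le> exp (real N * ln (1 + a))" by simp
  also have "\<dots> = (1 + a) ^ N" using a0 by (simp add: exp_of_nat_mult)
  finally have "Rmax / Rmin \<le> (1 + a) ^ N" unfolding L_def using R by simp
  hence rrN: "Rmax \<le> rr N" unfolding rr_def' using R by (simp add: pos_divide_le_eq mult.commute)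
  have sN: "s \<le> N" unfolding s_def using rrN by (rule Least_le)
  have rrs: "Rmax \<le> rr s" unfolding s_def using rrN by (rule LeastI)
  have part1: "real s \<le> real_of_int \<lceil>8 / (exp 1 * \<epsilon>) * ln (Rmax / Rmin)\<rceil>"
    using sN ceil0 unfolding N_def L_def by linarith
  have part2: "\<exists>i\<le>s. \<bar>Phi B m (gauss_kernel c (rr i)) - Phi B m (gauss_kernel c r)\<bar> \<le> \<epsilon>"
    if r: "r \<in> {Rmin..Rmax}" for r
  proof -
    have r0: "r > 0" using r R by simp
    define j where "j = (LEAST j. r \<le> rr j)"
    have ex: "r \<le> rr s" using r rrs by simp
    have js: "j \<le> s" unfolding j_def using ex by (rule Least_le)
    have rj: "r \<le> rr j" unfolding j_def using ex by (rule LeastI)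
    show ?thesis
    proof (cases j)
      case 0
      hence "r = rr 0" using rj r unfolding rr_def' by simp
      thus ?thesis using eps by (intro exI[of _ 0]) auto
    next
      case (Suc k)
      have rk: "rr k < r" unfolding j_def
        using not_less_Least[of k "\<lambda>j. r \<le> rr j"] Suc j_def by auto
      have rsk: "rr (Suc k) = rr k * (1 + a)" unfolding rr_def' by simp
      show ?thesis
      proof (cases "r^2 \<le> (rr k)^2 * (1 + a)")
        case True
        have "\<bar>Phi B m (gauss_kernel c (rr k)) - Phi B m (gauss_kernel c r)\<bar> \<le> r^2 / (rr k)^2 - 1"
          using rk rr_pos[of k] by (intro phi_close[OF finB neB interior_max]) auto
        also have "\<dots> \<le> a"
        proof -
          have h: "r^2 \<le> (rr k)^2 + a * (rr k)^2" using True by (simp add: algebra_simps)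
          have "r^2 / (rr k)^2 \<le> ((rr k)^2 + a * (rr k)^2) / (rr k)^2"
            using h rr_pos[of k] by (intro divide_right_mono) auto
          also have "\<dots> = 1 + a" using rr_pos[of k] by (simp add: field_simps)
          finally show ?thesis by simp
        qed
        finally show ?thesis using ae js Suc by (intro exI[of _ k]) auto
      next
        case False
        have "\<bar>Phi B m (gauss_kernel c r) - Phi B m (gauss_kernel c (rr (Suc k)))\<bar> \<le> (rr (Suc k))^2 / r^2 - 1"
          using rj Suc r0 by (intro phi_close[OF finB neB interior_max]) auto
        also have "\<dots> \<le> a"
        proof -
          have "(rr (Suc k))^2 = (rr k)^2 * (1 + a) * (1 + a)" unfolding rsk by (simp add: power2_eq_square)
          also have "\<dots> \<le> r^2 * (1 + a)" using False a0 by (intro mult_right_mono) auto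
          finally have "(rr (Suc k))^2 / r^2 \<le> 1 + a" using r0 by (simp add: divide_simps mult.commute)
          thus ?thesis by simp
        qed
        finally show ?thesis using ae js Suc by (intro exI[of _ "Suc k"]) (auto simp: abs_minus_commute)
      qed
    qed
  qed
  show ?thesis using part1 part2 by blast
qed

end
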